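(* For any object $(E,\sigma)$ of $\mathrm{OS}_B$, the poset $E^\star$ is Noetherian, i.e. every upward-closed subset of $E^\star$ has only finitely many minimal elements.
   Context: An object of $\mathrm{OS}_B$ is a pair $(E,\sigma)$ with $E$ a totally ordered finite set and $\sigma$ an order-reversing involution with a unique fixed point; write $-e:=\sigma(e)$. $E^\star$ is the set of finite words in the alphabet $E$, partially ordered by: $e_1\cdots e_m\le f_1\cdots f_n$ iff there is a strictly increasing map $\theta:[m]\to[n]$ such that $e_i=f_{\theta(i)}$ for all $i\in[m]$, and for every $j\in[n]$ there exists $i\in[m]$ with $\theta(i)\le j$ and $f_{\theta(i)}\in\{f_j,-f_j\}$. (That is, the first word is a subword of the second containing the first occurrence of every $\sigma$-orbit appearing in the second.) *)

theory Defs
  imports Main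
begin

text \<open>An object (E, sigma) of OS_B: E a finite totally ordered set (the total order is
the ambient linorder on the type restricted to E), sigma an order-reversing involution
of E with a unique fixed point.\<close>
definition OS_B_obj :: "'a::linorder set \<Rightarrow> ('a \<Rightarrow> 'a) \<Rightarrow> bool" where
  "OS_B_obj E \<sigma> \<longleftrightarrow>
     finite E \<and> \<sigma> ` E \<subseteq> E \<and> (\<forall>e\<in>E. \<sigma> (\<sigma> e) = e) \<and>
     (\<forall>x\<in>E. \<forall>y\<in>E. x \<le> y \<longrightarrow> \<sigma> y \<le> \<sigma> x) \<and>
     (\<exists>!e. e \<in> E \<and> \<sigma> e = e)"

definition word_le :: "('a \<Rightarrow> 'a) \<Rightarrow> 'a list \<Rightarrow> 'a list \<Rightarrow> bool" where
  "word_le \<sigma> u w \<longleftrightarrow>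
     (\<exists>\<theta> :: nat \<Rightarrow> nat.
        (\<forall>i<length u. \<theta> i < length w) \<and>
        (\<forall>i<length u. \<forall>i'<length u. i < i' \<longrightarrow> \<theta> i < \<theta> i') \<and>
        (\<forall>i<length u. u ! i = w ! (\<theta> i)) \<and>
        (\<forall>j<length w. \<exists>i<length u. \<theta> i \<le> j \<and> w ! (\<theta> i) \<in> {w ! j, \<sigma> (w ! j)}))"

definition upward_closed_words :: "'a set \<Rightarrow> ('a \<Rightarrow> 'a) \<Rightarrow> 'a list set \<Rightarrow> bool" where
  "upward_closed_words E \<sigma> U \<longleftrightarrow>
     U \<subseteq> lists E \<and> (\<forall>u\<in>U. \<forall>w\<in>lists E. word_le \<sigma> u w \<longrightarrow> w \<in> U)"

definition minimal_words :: "('a \<Rightarrow> 'a) \<Rightarrow> 'a list set \<Rightarrow> 'a list set" where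
  "minimal_words \<sigma> U = {u \<in> U. \<forall>v\<in>U. word_le \<sigma> v u \<longrightarrow> v = u}"

end

theory Submission
  imports Defs "HOL-Library.Sublist" "HOL-Library.Infinite_Set"
begin


definition bad :: "(nat \<Rightarrow> 'b list) \<Rightarrow> bool" where
  "bad f \<longleftrightarrow> (\<forall>i j. i < j \<longrightarrow> \<not> subseq (f i) (f j))"

definition gext :: "'b set \<Rightarrow> 'b list list \<Rightarrow> bool" where
  "gext A ps \<longleftrightarrow> (\<exists>f. bad f \<and> (\<forall>i. set (f i) \<subseteq> A) \<and> (\<forall>i<length ps. f i = ps ! i))"

definition nxt :: "'b set \<Rightarrow> 'b list list \<Rightarrow> 'b list" where
  "nxt A ps = (SOME w. gext A (ps @ [w]) \<and> (\<forall>w'. gext A (ps @ [w']) \<longrightarrow> length w \<le> length w'))"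

lemma least_len:
  assumes "Q (x::'c list)"
  shows "\<exists>w. Q w \<and> (\<forall>w'. Q w' \<longrightarrow> length w \<le> length w')"
  using assms
proof (induction "length x" arbitrary: x rule: less_induct)
  case less
  show ?case
  proof (cases "\<exists>y. Q y \<and> length y < length x")
    case True
    then obtain y where "Q y" "length y < length x" by blast
    then show ?thesis using less.hyps by blast
  next
    case False
    then show ?thesis using less.prems by (intro exI[of _ x]) (auto simp: not_less)
  qed
qed

lemma nxt_spec:
  assumes "gext A ps"
  shows "gext A (ps @ [nxt A ps]) \<and> (\<forall>w'. gext A (ps @ [w']) \<longrightarrow> length (nxt A ps) \<le> length w')"
proof -
  from assms obtain f where f: "bad f" "\<forall>i. set (f i) \<subseteq> A" "\<forall>i<length ps. f i = ps ! i"
    unfolding gext_def by (elim exE conjE)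
  have "\<forall>i<length (ps @ [f (length ps)]). f i = (ps @ [f (length ps)]) ! i"
  proof (intro allI impI)
    fix i assume "i < length (ps @ [f (length ps)])"
    then have "i < length ps \<or> i = length ps" by auto
    then show "f i = (ps @ [f (length ps)]) ! i" using f(3) by (auto simp: nth_append)
  qed
  then have "gext A (ps @ [f (length ps)])" unfolding gext_def using f(1,2) by blast
  then have "\<exists>w. gext A (ps @ [w]) \<and> (\<forall>w'. gext A (ps @ [w']) \<longrightarrow> length w \<le> length w')"
    by (rule least_len)
  then show ?thesis unfolding nxt_def by (rule someI_ex)
qed

fun pre :: "'b set \<Rightarrow> nat \<Rightarrow> 'b list list" where
  "pre A 0 = []"
| "pre A (Suc n) = pre A n @ [nxt A (pre A n)]"

lemma length_pre[simp]: "length (pre A n) = n"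
  by (induction n) auto

lemma pre_nth: "i < n \<Longrightarrow> pre A n ! i = nxt A (pre A i)"
proof (induction n)
  case 0 then show ?case by simp
next
  case (Suc n) then show ?case
    by (cases "i < n") (auto simp: nth_append less_Suc_eq)
qed


lemma gext_pre_all: assumes "gext A []" shows "gext A (pre A n)"
  using assms by (induction n) (auto dest: nxt_spec)

lemma higman:
  fixes f :: "nat \<Rightarrow> 'b list"
  assumes A: "finite A" and fA: "\<forall>i. set (f i) \<subseteq> A"
  shows "\<exists>i j. i < j \<and> subseq (f i) (f j)"
proof (rule ccontr)
  assume "\<not> ?thesis"
  then have "bad f" unfolding bad_def by blast
  with fA have g0: "gext A []" unfolding gext_def by auto
  define m where "m i = nxt A (pre A i)" for i
  have pre_m: "i < n \<Longrightarrow> pre A n ! i = m i" for i n unfolding m_def by (rule pre_nth)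
  have ext: "\<exists>g. bad g \<and> (\<forall>i. set (g i) \<subseteq> A) \<and> (\<forall>i<n. g i = m i)" for n
    using gext_pre_all[OF g0, of n] pre_m unfolding gext_def by auto
  have mbad: "bad m" unfolding bad_def
  proof (intro allI impI)
    fix i j :: nat assume "i < j"
    from ext[of "Suc j"] obtain g where "bad g" "\<forall>i<Suc j. g i = m i" by blast
    moreover have "g i = m i" "g j = m j" using \<open>i < j\<close> \<open>\<forall>i<Suc j. g i = m i\<close> by auto
    ultimately show "\<not> subseq (m i) (m j)" using \<open>i < j\<close> unfolding bad_def by metis
  qed
  have mA: "set (m i) \<subseteq> A" for i
  proof -
    from ext[of "Suc i"] obtain g where "\<forall>i. set (g i) \<subseteq> A" "\<forall>k<Suc i. g k = m k" by blast
    then show ?thesis by (metis lessI)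
  qed
  have mmin: "length (m n) \<le> length (g n)"
    if "bad g" "\<forall>i. set (g i) \<subseteq> A" "\<forall>i<n. g i = m i" for g n
  proof -
    have "\<forall>i<length (pre A n @ [g n]). g i = (pre A n @ [g n]) ! i"
    proof (intro allI impI)
      fix i assume "i < length (pre A n @ [g n])"
      then have "i < n \<or> i = n" by auto
      then show "g i = (pre A n @ [g n]) ! i" using that(3) pre_m[of i n] by (auto simp: nth_append)
    qed
    then have "gext A (pre A n @ [g n])" unfolding gext_def using that by blast
    then show ?thesis using nxt_spec[OF gext_pre_all[OF g0, of n]] unfolding m_def by blast
  qed
  have ne: "m i \<noteq> []" for i
  proof
    assume "m i = []"
    then have "subseq (m i) (m (Suc i))" by simp
    moreover have "\<not> subseq (m i) (m (Suc i))" using mbad unfolding bad_def by simp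
    ultimately show False by contradiction
  qed
  define a where "a i = hd (m i)" for i
  define t where "t i = tl (m i)" for i
  have mat: "m i = a i # t i" for i using ne[of i] unfolding a_def t_def by simp
  have aA: "a i \<in> A" for i using mA[of i] mat[of i] by auto
  have "\<exists>c. infinite {i. a i = c}"
  proof (rule ccontr)
    assume "\<not> ?thesis"
    then have "finite (\<Union>c\<in>A. {i. a i = c})" using A by auto
    moreover have "(\<Union>c\<in>A. {i. a i = c}) = UNIV" using aA by auto
    ultimately show False by simp
  qed
  then obtain c where "infinite {i. a i = c}" by blast
  from infinite_enumerate[OF this] obtain r :: "nat \<Rightarrow> nat" where r0: "strict_mono r" "\<forall>n. r n \<in> {i. a i = c}" by blast
  have r: "strict_mono r" "\<forall>n. a (r n) = c" using r0 by simp_all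
  define n where "n = r 0"
  define g where "g i = (if i < n then m i else t (r (i - n)))" for i
  have gA: "\<forall>i. set (g i) \<subseteq> A"
  proof
    fix i show "set (g i) \<subseteq> A" using mA[of i] mA[of "r (i - n)"] mat[of "r (i - n)"] unfolding g_def by auto
  qed
  have glen: "length (g n) < length (m n)" unfolding g_def n_def using mat[of "r 0"] by simp
  have "\<forall>i<n. g i = m i" unfolding g_def by simp
  then have "bad g \<Longrightarrow> length (m n) \<le> length (g n)" using mmin[of g n] gA by blast
  then have "\<not> bad g" using glen by linarith
  then obtain i j where ij: "i < j" "subseq (g i) (g j)" unfolding bad_def by blast
  show False
  proof (cases "j < n")
    case True
    then have "g i = m i" "g j = m j" using ij(1) unfolding g_def by auto
    then have "subseq (m i) (m j)" using ij(2) by simp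
    moreover have "\<not> subseq (m i) (m j)" using mbad ij(1) unfolding bad_def by simp
    ultimately show ?thesis by contradiction
  next
    case jn: False
    have rj: "n \<le> r (j - n)" unfolding n_def using r(1) by (simp add: strict_mono_less_eq)
    show ?thesis
    proof (cases "i < n")
      case True
      then have "subseq (m i) (t (r (j - n)))" using ij jn unfolding g_def by auto
      then have "subseq (m i) (a (r (j - n)) # t (r (j - n)))" by (rule list_emb_Cons)
      then have "subseq (m i) (m (r (j - n)))" by (simp only: mat[symmetric])
      moreover have "i < r (j - n)" using True rj by simp
      ultimately show ?thesis using mbad unfolding bad_def by blast
    next
      case False
      then have "subseq (t (r (i - n))) (t (r (j - n)))" using ij jn unfolding g_def by auto
      then have "subseq (c # t (r (i - n))) (c # t (r (j - n)))" by (rule subseq_Cons2)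
      then have "subseq (m (r (i - n))) (m (r (j - n)))" using r(2) by (simp only: mat)
      moreover have "r (i - n) < r (j - n)" using r(1) ij False by (simp add: strict_mono_less)
      ultimately show ?thesis using mbad unfolding bad_def by blast
    qed
  qed
qed


lemma subseq_idx:
  "subseq xs ys \<Longrightarrow> \<exists>\<theta>::nat\<Rightarrow>nat. (\<forall>i<length xs. \<theta> i < length ys) \<and>
     (\<forall>i i'. i < i' \<and> i' < length xs \<longrightarrow> \<theta> i < \<theta> i') \<and> (\<forall>i<length xs. xs ! i = ys ! \<theta> i)"
proof (induction rule: list_emb.induct)
  case (list_emb_Nil ys) then show ?case by simp
next
  case (list_emb_Cons xs ys y)
  from list_emb_Cons.IH obtain \<theta> :: "nat \<Rightarrow> nat" where t: "\<forall>i<length xs. \<theta> i < length ys"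
     "\<forall>i i'. i < i' \<and> i' < length xs \<longrightarrow> \<theta> i < \<theta> i'" "\<forall>i<length xs. xs ! i = ys ! \<theta> i" by (elim exE conjE)
  have "(\<forall>i<length xs. Suc (\<theta> i) < length (y#ys)) \<and>
    (\<forall>i i'. i < i' \<and> i' < length xs \<longrightarrow> Suc (\<theta> i) < Suc (\<theta> i')) \<and>
    (\<forall>i<length xs. xs ! i = (y#ys) ! Suc (\<theta> i))" using t by simp
  then show ?case by (rule exI[where x="\<lambda>i. Suc (\<theta> i)"])
next
  case (list_emb_Cons2 x y xs ys)
  from list_emb_Cons2.IH obtain \<theta> :: "nat \<Rightarrow> nat" where t: "\<forall>i<length xs. \<theta> i < length ys"
     "\<forall>i i'. i < i' \<and> i' < length xs \<longrightarrow> \<theta> i < \<theta> i'" "\<forall>i<length xs. xs ! i = ys ! \<theta> i" by (elim exE conjE)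
  define \<phi> where "\<phi> i = (case i of 0 \<Rightarrow> 0 | Suc k \<Rightarrow> Suc (\<theta> k))" for i
  have p0: "\<phi> 0 = 0" and pS: "\<phi> (Suc k) = Suc (\<theta> k)" for k by (simp_all add: \<phi>_def)
  have A: "\<forall>i<length (x#xs). \<phi> i < length (y#ys)"
  proof (intro allI impI)
    fix i assume "i < length (x#xs)" then show "\<phi> i < length (y#ys)"
      using t(1) by (cases i) (simp_all add: p0 pS)
  qed
  have B: "\<forall>i i'. i < i' \<and> i' < length (x#xs) \<longrightarrow> \<phi> i < \<phi> i'"
  proof (intro allI impI)
    fix i i' assume a: "i < i' \<and> i' < length (x#xs)"
    then obtain k' where k': "i' = Suc k'" by (cases i') auto
    show "\<phi> i < \<phi> i'"
    proof (cases i)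
      case 0 then show ?thesis by (simp add: p0 pS k')
    next
      case (Suc k) then show ?thesis using a t(2) by (simp add: pS k')
    qed
  qed
  have C: "\<forall>i<length (x#xs). (x#xs) ! i = (y#ys) ! \<phi> i"
  proof (intro allI impI)
    fix i assume "i < length (x#xs)" then show "(x#xs) ! i = (y#ys) ! \<phi> i"
      using t(3) list_emb_Cons2.hyps(1) by (cases i) (simp_all add: p0 pS)
  qed
  from A B C show ?case by (intro exI[where x=\<phi>] conjI)
qed

definition newp :: "('a \<Rightarrow> 'a) \<Rightarrow> 'a list \<Rightarrow> nat \<Rightarrow> bool" where
  "newp \<sigma> w k \<longleftrightarrow> (\<forall>k'<k. w ! k' \<notin> {w ! k, \<sigma> (w ! k)})"

definition tag :: "('a \<Rightarrow> 'a) \<Rightarrow> 'a list \<Rightarrow> ('a \<times> bool) list" where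
  "tag \<sigma> w = map (\<lambda>k. (w ! k, newp \<sigma> w k)) [0..<length w]"

definition NP :: "('a \<Rightarrow> 'a) \<Rightarrow> 'a list \<Rightarrow> nat set" where
  "NP \<sigma> w = {k. k < length w \<and> newp \<sigma> w k}"

lemma length_tag[simp]: "length (tag \<sigma> w) = length w" by (simp add: tag_def)
lemma nth_tag: "k < length w \<Longrightarrow> tag \<sigma> w ! k = (w ! k, newp \<sigma> w k)" by (simp add: tag_def)

lemma key:
  assumes os: "OS_B_obj E \<sigma>" and uE: "set u \<subseteq> E" and wE: "set w \<subseteq> E"
    and sub: "subseq (tag \<sigma> u) (tag \<sigma> w)" and c: "card (NP \<sigma> u) = card (NP \<sigma> w)"
  shows "word_le \<sigma> u w"
proof -
  have inv: "\<And>e. e \<in> E \<Longrightarrow> \<sigma> (\<sigma> e) = e" using os unfolding OS_B_obj_def by blast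
  from subseq_idx[OF sub] obtain \<theta> :: "nat \<Rightarrow> nat" where t: "\<forall>i<length u. \<theta> i < length w"
     "\<forall>i i'. i < i' \<and> i' < length u \<longrightarrow> \<theta> i < \<theta> i'"
     "\<forall>i<length u. tag \<sigma> u ! i = tag \<sigma> w ! \<theta> i" unfolding length_tag by (elim exE conjE)
  have eq: "u ! i = w ! \<theta> i \<and> newp \<sigma> u i = newp \<sigma> w (\<theta> i)" if "i < length u" for i
  proof -
    have "tag \<sigma> u ! i = tag \<sigma> w ! \<theta> i" using t(3) that by blast
    moreover have "\<theta> i < length w" using t(1) that by blast
    ultimately show ?thesis using that by (simp add: nth_tag)
  qed
  have sub2: "\<theta> ` NP \<sigma> u \<subseteq> NP \<sigma> w"
  proof
    fix x assume "x \<in> \<theta> ` NP \<sigma> u"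
    then obtain i where i: "i < length u" "newp \<sigma> u i" "x = \<theta> i" unfolding NP_def by blast
    then show "x \<in> NP \<sigma> w" using eq[OF i(1)] t(1) unfolding NP_def by simp
  qed
  have inj: "inj_on \<theta> (NP \<sigma> u)"
  proof (rule inj_onI)
    fix x y assume xy: "x \<in> NP \<sigma> u" "y \<in> NP \<sigma> u" "\<theta> x = \<theta> y"
    show "x = y"
    proof (rule ccontr)
      assume "x \<noteq> y"
      then have "x < y \<or> y < x" by arith
      moreover have "x < length u" "y < length u" using xy unfolding NP_def by auto
      ultimately have "\<theta> x < \<theta> y \<or> \<theta> y < \<theta> x" using t(2) by blast
      then show False using xy(3) by simp
    qed
  qed
  have finw: "finite (NP \<sigma> w)" unfolding NP_def by simp
  have "card (\<theta> ` NP \<sigma> u) = card (NP \<sigma> w)" using card_image[OF inj] c by simp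
  then have img: "\<theta> ` NP \<sigma> u = NP \<sigma> w" using card_subset_eq[OF finw sub2] by simp
  have last: "\<exists>i<length u. \<theta> i \<le> j \<and> w ! \<theta> i \<in> {w ! j, \<sigma> (w ! j)}" if j: "j < length w" for j
  proof -
    define P where "P k \<longleftrightarrow> w ! k \<in> {w ! j, \<sigma> (w ! j)}" for k
    define j0 where "j0 = (LEAST k. P k)"
    have Pj: "P j" unfolding P_def by simp
    have Pj0: "P j0" unfolding j0_def by (rule LeastI[of P, OF Pj])
    have j0j: "j0 \<le> j" unfolding j0_def by (rule Least_le[of P, OF Pj])
    have wjE: "w ! j \<in> E" using wE j by (meson nth_mem subsetD)
    have "newp \<sigma> w j0" unfolding newp_def
    proof (intro allI impI)
      fix k' assume k': "k' < j0"
      show "w ! k' \<notin> {w ! j0, \<sigma> (w ! j0)}"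
      proof
        assume a: "w ! k' \<in> {w ! j0, \<sigma> (w ! j0)}"
        have ss: "\<sigma> (\<sigma> (w ! j)) = w ! j" by (rule inv[OF wjE])
        have "w ! j0 = w ! j \<or> w ! j0 = \<sigma> (w ! j)" using Pj0 unfolding P_def by simp
        moreover have "w ! k' = w ! j0 \<or> w ! k' = \<sigma> (w ! j0)" using a by simp
        ultimately have "w ! k' = w ! j \<or> w ! k' = \<sigma> (w ! j)" using ss by auto
        then have "P k'" unfolding P_def by simp
        then show False using not_less_Least[of k' P] k' unfolding j0_def by blast
      qed
    qed
    then have "j0 \<in> NP \<sigma> w" using j j0j unfolding NP_def by simp
    then have "j0 \<in> \<theta> ` NP \<sigma> u" by (simp only: img)
    then obtain i where i: "i \<in> NP \<sigma> u" "\<theta> i = j0" by (elim imageE) simp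
    then have "i < length u" unfolding NP_def by simp
    moreover have "\<theta> i \<le> j" using i(2) j0j by simp
    moreover have "w ! \<theta> i \<in> {w ! j, \<sigma> (w ! j)}" using Pj0 i(2) unfolding P_def by simp
    ultimately show ?thesis by blast
  qed
  show ?thesis unfolding word_le_def
  proof (intro exI[of _ \<theta>] conjI)
    show "\<forall>i<length u. \<theta> i < length w" by (rule t(1))
    show "\<forall>i<length u. \<forall>i'<length u. i < i' \<longrightarrow> \<theta> i < \<theta> i'" using t(2) by blast
    show "\<forall>i<length u. u ! i = w ! \<theta> i" using eq by blast
    show "\<forall>j<length w. \<exists>i<length u. \<theta> i \<le> j \<and> w ! \<theta> i \<in> {w ! j, \<sigma> (w ! j)}" using last by blast
  qed
qed

lemma card_NP_le:
  assumes fin: "finite E" and wE: "set w \<subseteq> E"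
  shows "card (NP \<sigma> w) \<le> card E"
proof -
  have "inj_on (\<lambda>k. w ! k) (NP \<sigma> w)"
  proof (rule inj_onI)
    fix x y assume xy: "x \<in> NP \<sigma> w" "y \<in> NP \<sigma> w" "w ! x = w ! y"
    show "x = y"
    proof (rule ccontr)
      assume "x \<noteq> y"
      then have "x < y \<or> y < x" by arith
      then show False
      proof
        assume "x < y"
        moreover have "\<forall>k'<y. w ! k' \<notin> {w ! y, \<sigma> (w ! y)}" using xy(2) unfolding NP_def newp_def by simp
        ultimately have "w ! x \<notin> {w ! y, \<sigma> (w ! y)}" by blast
        then show False using xy(3) by simp
      next
        assume "y < x"
        moreover have "\<forall>k'<x. w ! k' \<notin> {w ! x, \<sigma> (w ! x)}" using xy(1) unfolding NP_def newp_def by simp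
        ultimately have "w ! y \<notin> {w ! x, \<sigma> (w ! x)}" by blast
        then show False using xy(3) by simp
      qed
    qed
  qed
  moreover have "(\<lambda>k. w ! k) ` NP \<sigma> w \<subseteq> E"
  proof
    fix x assume "x \<in> (\<lambda>k. w ! k) ` NP \<sigma> w"
    then obtain k where "k < length w" "x = w ! k" unfolding NP_def by blast
    then show "x \<in> E" using wE by (meson nth_mem subsetD)
  qed
  ultimately show ?thesis by (rule card_inj_on_le[OF _ _ fin])
qed

theorem mainTheorem7:
  fixes E :: "'a::linorder set" and \<sigma> :: "'a \<Rightarrow> 'a"
  assumes "OS_B_obj E \<sigma>"
  shows "\<forall>U. upward_closed_words E \<sigma> U \<longrightarrow> finite (minimal_words \<sigma> U)"
proof (intro allI impI)
  fix U assume U: "upward_closed_words E \<sigma> U"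
  have fin: "finite E" using assms unfolding OS_B_obj_def by blast
  show "finite (minimal_words \<sigma> U)"
  proof (rule ccontr)
    assume "infinite (minimal_words \<sigma> U)"
    from infinite_countable_subset[OF this] obtain s :: "nat \<Rightarrow> 'a list"
      where s: "inj s" "range s \<subseteq> minimal_words \<sigma> U" by blast
    have sU: "s n \<in> U" for n using s(2) unfolding minimal_words_def by auto
    have sE: "set (s n) \<subseteq> E" for n using sU[of n] U unfolding upward_closed_words_def by auto
    have "\<exists>c. infinite {n. card (NP \<sigma> (s n)) = c}"
    proof (rule ccontr)
      assume "\<not> ?thesis"
      then have "finite (\<Union>c\<in>{0..card E}. {n. card (NP \<sigma> (s n)) = c})" by blast
      moreover have "(\<Union>c\<in>{0..card E}. {n. card (NP \<sigma> (s n)) = c}) = UNIV"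
      proof (intro set_eqI iffI)
        fix n :: nat
        have "card (NP \<sigma> (s n)) \<in> {0..card E}" using card_NP_le[OF fin sE] by simp
        then show "n \<in> (\<Union>c\<in>{0..card E}. {n. card (NP \<sigma> (s n)) = c})" by blast
      qed simp
      ultimately show False by simp
    qed
    then obtain c where "infinite {n. card (NP \<sigma> (s n)) = c}" by blast
    from infinite_enumerate[OF this] obtain r :: "nat \<Rightarrow> nat" where r0: "strict_mono r" "\<forall>n. r n \<in> {n. card (NP \<sigma> (s n)) = c}"
      by blast
    have r: "strict_mono r" "\<forall>n. card (NP \<sigma> (s (r n))) = c" using r0 by simp_all
    have tA: "\<forall>k. set (tag \<sigma> (s (r k))) \<subseteq> E \<times> UNIV"
    proof (intro allI subsetI)
      fix k x assume "x \<in> set (tag \<sigma> (s (r k)))"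
      then obtain q where "q < length (s (r k))" "x = (s (r k) ! q, newp \<sigma> (s (r k)) q)"
        unfolding tag_def by auto
      then show "x \<in> E \<times> UNIV" using sE[of "r k"] by (simp add: nth_mem subsetD)
    qed
    have finA: "finite (E \<times> (UNIV :: bool set))" using fin by simp
    from higman[OF finA tA] obtain k l where kl: "k < l" "subseq (tag \<sigma> (s (r k))) (tag \<sigma> (s (r l)))"
      by blast
    have "word_le \<sigma> (s (r k)) (s (r l))"
      using key[OF assms sE sE kl(2)] r(2) by simp
    moreover have "s (r l) \<in> minimal_words \<sigma> U" using s(2) by blast
    ultimately have "s (r k) = s (r l)" using sU[of "r k"] unfolding minimal_words_def by blast
    then have "r k = r l" using s(1) by (simp add: inj_eq)
    then show False using r(1) kl(1) by (simp add: strict_mono_eq)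
  qed
qed

end
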